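(* Let $\mathcal M\subset\mathbb R^3$ be the surface of revolution described in the context, and suppose $\mathcal M$ is symmetric about the $X$-$Y$ plane. Then for every integer $n\ge 1$ there exists a rotating $2n$-vortex solution (in the sense of the context) of the generalized point-vortex system $$d_i\,\dot{\mathbf p}_i=\frac{r_i^2}{\alpha_i^2}\left[(1-\alpha_i')\frac{\mathbf p_i^{\perp}}{r_i^2}+2\sum_{j\neq i}d_id_j\frac{(\mathbf p_i-\mathbf p_j)^{\perp}}{|\mathbf p_i-\mathbf p_j|^2}\right],\qquad i=1,\dots,2n,$$ whose orbits $C_\pm\subset\mathcal M$ (the images under $\mathbf P$ of the circles traced by the degree $+1$ and degree $-1$ vortices) are symmetric to each other about the $X$-$Y$ plane.
   Context: $\mathcal M$ is obtained by rotating about the $Z$-axis a regular curve $\gamma(s)=(\alpha(s),0,\beta(s))$, $0\le s\le l$, parametrized by arc length ($|\gamma'|=1$), with $\alpha(s)>0$ for $s\ne 0,l$ and $\alpha(0)=\alpha(l)=\beta'(0)=\beta'(l)=0$, so that $\mathcal M$ is a smooth simply connected compact surface without boundary. Let $S:[0,\pi]\to[0,l]$ solve $S'(\phi)\sin\phi=\alpha(S(\phi))$ with $S(0)=0$, $S(\pi)=l$. Define $\mathbf P:\mathbb R^2\cup\{\infty\}\to\mathcal M$ by $\mathbf P(x,y)=(\alpha(S(\phi))\cos\theta,\alpha(S(\phi))\sin\theta,\beta(S(\phi)))$, where $\theta$ is the polar angle of $(x,y)$ and $\cos\phi=\frac{1-r^2}{1+r^2}$, $r^2=x^2+y^2$ (inverse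 stereographic projection followed by a conformal map $\mathcal S^2\to\mathcal M$). For a planar point $\mathbf p_i$ with $r_i=|\mathbf p_i|$, write $\alpha_i=\alpha(S(\phi(\mathbf p_i)))$ and $\alpha_i'=\alpha'(S(\phi(\mathbf p_i)))$; $\mathbf v^\perp$ denotes the rotation of $\mathbf v\in\mathbb R^2$ by $\pi/2$. A rotating $2n$-vortex solution is a solution with degrees $d_i=1$ for $1\le i\le n$ and $d_i=-1$ for $n+1\le i\le 2n$, of the form $\mathbf p_i=r_1(\cos(\Theta_i+\omega_0t),\sin(\Theta_i+\omega_0t))$ for $1\le i\le n$ and $\mathbf p_{i}=r_2(\cos(\Theta_{i-n}+\omega_0t),\sin(\Theta_{i-n}+\omega_0t))$ for $n+1\le i\le 2n$, where $\Theta_i=\frac{2\pi}{n}(i-1)$ and $r_1,r_2,\omega_0$ are constants. *)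

theory Defs
  imports "HOL-Analysis.Analysis"
begin

text \<open>Planar points are represented as complex numbers (R^2 = C); the rotation by pi/2
  of a vector v is then i * v.\<close>

definition surfM :: "(real \<Rightarrow> real) \<Rightarrow> (real \<Rightarrow> real) \<Rightarrow> real \<Rightarrow> (real \<times> real \<times> real) set" where
  "surfM \<alpha> \<beta> l = {(\<alpha> s * cos \<theta>, \<alpha> s * sin \<theta>, \<beta> s) | s \<theta>. s \<in> {0..l}}"

definition reflXY :: "real \<times> real \<times> real \<Rightarrow> real \<times> real \<times> real" where
  "reflXY = (\<lambda>(x, y, z). (x, y, - z))"

definition sph_angle :: "complex \<Rightarrow> real" where
  "sph_angle p = arccos ((1 - (cmod p)\<^sup>2) / (1 + (cmod p)\<^sup>2))"

definition Pmap :: "(real \<Rightarrow> real) \<Rightarrow> (real \<Rightarrow> real) \<Rightarrow> (real \<Rightarrow> real) \<Rightarrow> complex \<Rightarrow> real \<times> real \<times> real" where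
  "Pmap \<alpha> \<beta> S p = (\<alpha> (S (sph_angle p)) * cos (Arg p), \<alpha> (S (sph_angle p)) * sin (Arg p),
                      \<beta> (S (sph_angle p)))"

definition perp :: "complex \<Rightarrow> complex" where
  "perp v = \<i> * v"

definition deg :: "nat \<Rightarrow> nat \<Rightarrow> real" where
  "deg n i = (if i \<le> n then 1 else -1)"

text \<open>Right-hand side of the generalized point-vortex system for vortex i, given
  the configuration q (positions of vortices 1..N), degrees d, and alpha' = da.\<close>
definition pv_rhs :: "(real \<Rightarrow> real) \<Rightarrow> (real \<Rightarrow> real) \<Rightarrow> (real \<Rightarrow> real) \<Rightarrow> nat \<Rightarrow>
    (nat \<Rightarrow> real) \<Rightarrow> (nat \<Rightarrow> complex) \<Rightarrow> nat \<Rightarrow> complex" where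
  "pv_rhs \<alpha> da S N d q i =
     of_real ((cmod (q i))\<^sup>2 / (\<alpha> (S (sph_angle (q i))))\<^sup>2) *
     (of_real (1 - da (S (sph_angle (q i)))) * perp (q i) / of_real ((cmod (q i))\<^sup>2)
      + 2 * (\<Sum>j\<in>{1..N} - {i}. of_real (d i * d j) * perp (q i - q j) / of_real ((cmod (q i - q j))\<^sup>2)))"

definition is_pv_solution :: "(real \<Rightarrow> real) \<Rightarrow> (real \<Rightarrow> real) \<Rightarrow> (real \<Rightarrow> real) \<Rightarrow> nat \<Rightarrow>
    (nat \<Rightarrow> real) \<Rightarrow> (nat \<Rightarrow> real \<Rightarrow> complex) \<Rightarrow> bool" where
  "is_pv_solution \<alpha> da S N d p \<longleftrightarrow>
     (\<forall>t. \<forall>i\<in>{1..N}. \<exists>v. (p i has_vector_derivative v) (at t) \<and>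
          of_real (d i) * v = pv_rhs \<alpha> da S N d (\<lambda>j. p j t) i)"

definition rot_config :: "nat \<Rightarrow> real \<Rightarrow> real \<Rightarrow> real \<Rightarrow> nat \<Rightarrow> real \<Rightarrow> complex" where
  "rot_config n r1 r2 \<omega>0 i t =
     (if i \<le> n then of_real r1 * cis (2 * pi / real n * (real i - 1) + \<omega>0 * t)
      else of_real r2 * cis (2 * pi / real n * (real (i - n) - 1) + \<omega>0 * t))"

end

theory Submission
  imports Defs
begin

definition cc :: "nat \<Rightarrow> real \<Rightarrow> complex" where
  "cc n x = cis (2 * pi / real n * x)"

lemma cc_add: "cc n (x + y) = cc n x * cc n y"
  by (simp add: cc_def cis_mult distrib_left)

lemma cc_diff: "cc n (x - y) = cc n x / cc n y"
  by (simp add: cc_def cis_divide right_diff_distrib)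

lemma cc_norm [simp]: "cmod (cc n x) = 1"
  by (simp add: cc_def)

lemma cc_nz [simp]: "cc n x \<noteq> 0"
  unfolding cc_def by simp

lemma cc_cnj: "cnj (cc n x) = cc n (- x)"
  by (simp add: cc_def cis_cnj)

lemma cc_period: assumes "n > 0" shows "cc n (x + real n * of_int j) = cc n x"
proof -
  have "2 * pi / real n * (x + real n * of_int j) = 2 * pi / real n * x + 2 * pi * of_int j"
    using assms by (simp add: field_simps)
  then show ?thesis unfolding cc_def
    by (simp add: cis_mult[symmetric])
qed

lemma cc_eq_1: assumes "n > 0" "cc n x = 1" "\<bar>x\<bar> < real n" shows "x = 0"
proof -
  have "cos (2 * pi / real n * x) = 1" using assms(2) unfolding cc_def
    by (metis Re_complex_of_real cis.sel(1) one_complex.sel(1))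
  then obtain j :: int where j: "2 * pi / real n * x = j * 2 * pi" by (auto simp: cos_one_2pi_int)
  then have "x = real n * j" using assms(1) by (simp add: field_simps)
  with assms(3) have "\<bar>real n * j\<bar> < real n" by simp
  then have "\<bar>j\<bar> < 1" using assms(1)
    by (metis abs_mult abs_of_nat mult.right_neutral mult_less_cancel_left_pos of_int_abs of_nat_0_less_iff of_int_less_1_iff)
  then have "j = 0" by simp
  with \<open>x = real n * j\<close> show ?thesis by simp
qed

lemma cc_mod: assumes "n > 0" shows "cc n (real (k mod n)) = cc n (real k)"
proof -
  have "real k = real (k mod n) + real n * of_int (int (k div n))"
    by (metis add.commute mod_div_mult_eq of_int_of_nat_eq of_nat_add of_nat_mult mult.commute)
  then show ?thesis using cc_period[OF assms, of "real (k mod n)" "int (k div n)"] by simp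
qed

lemma reindex_shift:
  assumes "n > 0" "m < n"
  shows "(\<Sum>k<n. f (cc n (real k - real m))) = (\<Sum>k<n. f (cc n (real k)))"
proof (rule sum.reindex_bij_witness[where i = "\<lambda>b. (b + m) mod n" and j = "\<lambda>a. (a + n - m) mod n"])
  fix a assume a: "a \<in> {..<n}"
  show "(((a + n - m) mod n) + m) mod n = a"
    using a assms by (simp add: mod_add_left_eq)
  show "(a + n - m) mod n \<in> {..<n}" using assms by simp
  have "cc n (real ((a + n - m) mod n)) = cc n (real (a + n - m))" by (rule cc_mod[OF assms(1)])
  also have "real (a + n - m) = (real a - real m) + real n * of_int 1" using assms by simp
  also have "cc n \<dots> = cc n (real a - real m)" by (rule cc_period[OF assms(1)])
  finally show "f (cc n (real ((a + n - m) mod n))) = f (cc n (real a - real m))" by simp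
next
  fix b assume b: "b \<in> {..<n}"
  show "((b + m) mod n + n - m) mod n = b"
    using b assms by (cases "b + m < n") (auto simp: mod_if)
  show "(b + m) mod n \<in> {..<n}" using assms by simp
qed

lemma reindex_neg:
  assumes "n > 0"
  shows "(\<Sum>k<n. f (cc n (- real k))) = (\<Sum>k<n. f (cc n (real k)))"
proof (rule sum.reindex_bij_witness[where i = "\<lambda>b. (n - b) mod n" and j = "\<lambda>a. (n - a) mod n"])
  fix a assume a: "a \<in> {..<n}"
  show "(n - (n - a) mod n) mod n = a"
    using a assms by (cases "a = 0") auto
  show "(n - a) mod n \<in> {..<n}" using assms by simp
  have "cc n (real ((n - a) mod n)) = cc n (real (n - a))" by (rule cc_mod[OF assms(1)])
  also have "real (n - a) = (- real a) + real n * of_int 1" using a by simp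
  also have "cc n \<dots> = cc n (- real a)" by (rule cc_period[OF assms(1)])
  finally show "f (cc n (real ((n - a) mod n))) = f (cc n (- real a))" by simp
next
  fix b assume b: "b \<in> {..<n}"
  show "(n - (n - b) mod n) mod n = b"
    using b assms by (cases "b = 0") auto
  show "(n - b) mod n \<in> {..<n}" using assms by simp
qed

definition XX :: "nat \<Rightarrow> real \<Rightarrow> complex" where
  "XX n \<rho> = (\<Sum>k<n. 1 / (1 - of_real \<rho> * cc n (real k)))"

lemma XX_real: assumes "n > 0" shows "cnj (XX n \<rho>) = XX n \<rho>"
proof -
  have "cnj (XX n \<rho>) = (\<Sum>k<n. 1 / (1 - of_real \<rho> * cc n (- real k)))"
    by (simp add: XX_def cc_cnj)
  also have "\<dots> = XX n \<rho>"
    unfolding XX_def using reindex_neg[OF assms, of "\<lambda>z. 1 / (1 - of_real \<rho> * z)"] by simp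
  finally show ?thesis .
qed

lemma XX_of_real: assumes "n > 0" shows "XX n \<rho> = of_real (Re (XX n \<rho>))"
proof -
  have "Im (cnj (XX n \<rho>)) = Im (XX n \<rho>)" using XX_real[OF assms, of \<rho>] by simp
  then have "Im (XX n \<rho>) = 0" by simp
  then show ?thesis by (simp add: complex_eq_iff)
qed

lemma unit_pair: assumes "z * cnj z = 1" "z \<noteq> 1"
  shows "1 / (1 - z) + 1 / (1 - cnj z) = 1"
proof -
  have c1: "cnj z \<noteq> 1" using assms(2) by (metis complex_cnj_one complex_cnj_cnj)
  have a: "1 - z \<noteq> 0" "1 - cnj z \<noteq> 0" using assms(2) c1 by auto
  have e: "(1 - z) * (1 - cnj z) = (1 - cnj z) + (1 - z)" using assms(1) by (simp add: algebra_simps)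
  have "1 / (1 - z) + 1 / (1 - cnj z) = ((1 - cnj z) + (1 - z)) / ((1 - z) * (1 - cnj z))"
    using a by (simp add: field_simps)
  also have "\<dots> = 1"
  proof -
    have "(1 - z) * (1 - cnj z) \<noteq> 0" using a by simp
    then show ?thesis unfolding e by simp
  qed
  finally show ?thesis .
qed

lemma cc_unit: "cc n x * cnj (cc n x) = 1"
  using complex_norm_square[of "cc n x"] by simp

lemma XX_one: assumes "n > 0" shows "XX n 1 = of_real ((real n - 1) / 2)"
proof -
  have "XX n 1 + cnj (XX n 1) = (\<Sum>k<n. (1 / (1 - cc n (real k)) + 1 / (1 - cnj (cc n (real k)))))"
    by (simp add: XX_def sum.distrib)
  also have "\<dots> = (\<Sum>k<n. (if k = 0 then 0 else 1))"
  proof (rule sum.cong[OF refl])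
    fix k assume k: "k \<in> {..<n}"
    show "1 / (1 - cc n (real k)) + 1 / (1 - cnj (cc n (real k))) = (if k = 0 then 0 else 1)"
    proof (cases "k = 0")
      case True then show ?thesis by (simp add: cc_def)
    next
      case False
      have "cc n (real k) \<noteq> 1"
      proof
        assume "cc n (real k) = 1"
        from cc_eq_1[OF assms this] k False show False by simp
      qed
      then show ?thesis using False unit_pair[OF cc_unit] by simp
    qed
  qed
  also have "\<dots> = of_nat (n - 1)"
  proof -
    obtain n' where n': "n = Suc n'" using assms by (cases n) auto
    show ?thesis unfolding n' sum.lessThan_Suc_shift by simp
  qed
  finally have "2 * XX n 1 = of_nat (n - 1)" using XX_real[OF assms, of 1] by simp
  then show ?thesis using assms by (simp add: of_nat_diff field_simps)
qed

lemma pair_rho: assumes "c * cnj c = 1" "\<rho> \<noteq> 0" "c \<noteq> of_real \<rho>"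
  shows "1 / (1 - of_real \<rho> * cnj c) + 1 / (1 - of_real (1/\<rho>) * c) = 1"
proof -
  have cz: "c \<noteq> 0" using assms(1) by auto
  have cc': "cnj c = 1 / c" using assms(1) cz by (simp add: field_simps)
  have d: "c - of_real \<rho> \<noteq> 0" using assms(3) by simp
  have "1 / (1 - of_real \<rho> * cnj c) = c / (c - of_real \<rho>)" using cz unfolding cc' by (simp add: field_simps)
  moreover have "1 / (1 - of_real (1/\<rho>) * c) = of_real \<rho> / (of_real \<rho> - c)" using assms(2)
    by (simp add: field_simps of_real_divide)
  moreover have "of_real \<rho> / (of_real \<rho> - c) = - (of_real \<rho> / (c - of_real \<rho>))"
    by (metis divide_minus_right minus_diff_eq)
  moreover have "c / (c - of_real \<rho>) - of_real \<rho> / (c - of_real \<rho>) = 1"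
    using d by (simp add: diff_divide_distrib[symmetric])
  ultimately show ?thesis by simp
qed

lemma XX_pair: assumes "n > 0" "\<rho> > 0" "\<rho> \<noteq> 1"
  shows "XX n \<rho> + XX n (1/\<rho>) = of_nat n"
proof -
  have "XX n \<rho> + XX n (1/\<rho>) = cnj (XX n \<rho>) + XX n (1/\<rho>)" using XX_real[OF assms(1)] by simp
  also have "\<dots> = (\<Sum>k<n. (1 / (1 - of_real \<rho> * cnj (cc n (real k))) + 1 / (1 - of_real (1/\<rho>) * cc n (real k))))"
    by (simp add: XX_def sum.distrib)
  also have "\<dots> = (\<Sum>k<n. 1)"
  proof (rule sum.cong[OF refl])
    fix k assume k: "k \<in> {..<n}"
    have "cc n (real k) \<noteq> of_real \<rho>"
    proof
      assume "cc n (real k) = of_real \<rho>"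
      then have "cmod (cc n (real k)) = \<rho>" using assms(2) by simp
      then show False using assms(3) by simp
    qed
    then show "1 / (1 - of_real \<rho> * cnj (cc n (real k))) + 1 / (1 - of_real (1/\<rho>) * cc n (real k)) = 1"
      using pair_rho[OF cc_unit] assms(2) by simp
  qed
  finally show ?thesis by simp
qed

lemma ring_sum:
  assumes "n > 0" "m < n" "R > 0" "E \<noteq> 0"
  shows "(\<Sum>k<n. (of_real R * cc n (real m) * E) / (of_real R * cc n (real m) * E - of_real R' * cc n (real k) * E))
         = XX n (R' / R)"
proof -
  have "(\<Sum>k<n. (of_real R * cc n (real m) * E) / (of_real R * cc n (real m) * E - of_real R' * cc n (real k) * E))
      = (\<Sum>k<n. 1 / (1 - of_real (R'/R) * cc n (real k - real m)))"
  proof (rule sum.cong[OF refl])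
    fix k
    let ?x = "of_real R * cc n (real m) * E"
    have x: "?x \<noteq> 0" using assms by simp
    have "?x - of_real R' * cc n (real k) * E = ?x * (1 - of_real (R'/R) * cc n (real k - real m))"
      using assms x by (simp add: cc_diff field_simps of_real_divide)
    then show "?x / (?x - of_real R' * cc n (real k) * E) = 1 / (1 - of_real (R'/R) * cc n (real k - real m))"
      using x by simp
  qed
  also have "\<dots> = XX n (R'/R)"
    unfolding XX_def by (rule reindex_shift[OF assms(1,2), of "\<lambda>z. 1 / (1 - of_real (R'/R) * z)"])
  finally show ?thesis .
qed

lemma sum_split2: fixes n :: nat shows "(\<Sum>j\<in>{1..2*n}. F j) = (\<Sum>k<n. F (k+1)) + (\<Sum>k<n. F (n+k+1))"
proof -
  have "(\<Sum>j\<in>{1..2*n}. F j) = (\<Sum>j\<in>{1..n+n}. F j)" by (simp add: mult_2)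
  also have "\<dots> = (\<Sum>j\<in>{1..n}. F j) + (\<Sum>j\<in>{n+1..n+n}. F j)"
    by (rule sum.ub_add_nat) simp
  also have "(\<Sum>j\<in>{1..n}. F j) = (\<Sum>k<n. F (k+1))"
    using sum.atLeast1_atMost_eq[of F n] by simp
  also have "(\<Sum>j\<in>{n+1..n+n}. F j) = (\<Sum>j\<in>{1..n}. F (j + n))"
    using sum.shift_bounds_cl_nat_ivl[of F 1 n n] by (simp add: add.commute)
  also have "\<dots> = (\<Sum>k<n. F (n+k+1))"
    using sum.atLeast1_atMost_eq[of "\<lambda>j. F (j + n)" n] by (simp add: ac_simps)
  finally show ?thesis .
qed

lemma rot1: "1 \<le> i \<Longrightarrow> i \<le> n \<Longrightarrow>
   rot_config n r1 r2 \<omega> i t = of_real r1 * cc n (real (i - 1)) * cis (\<omega> * t)"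
  unfolding rot_config_def cc_def by (simp add: cis_mult of_nat_diff)

lemma rot2: "n < i \<Longrightarrow>
   rot_config n r1 r2 \<omega> i t = of_real r2 * cc n (real (i - n - 1)) * cis (\<omega> * t)"
  unfolding rot_config_def cc_def by (simp add: cis_mult of_nat_diff algebra_simps)
lemma deriv_rot: "((\<lambda>t. K * cis (\<omega> * t)) has_vector_derivative (K * (\<i> * of_real \<omega> * cis (\<omega> * t)))) (at t)"
proof -
  have "((\<lambda>t. cis (\<omega> * t)) has_derivative (\<lambda>h. (\<omega> * h) *\<^sub>R (\<i> * cis (\<omega> * t)))) (at t)"
    by (rule has_derivative_cis) (auto intro!: derivative_eq_intros)
  moreover have "(\<lambda>h. (\<omega> * h) *\<^sub>R (\<i> * cis (\<omega> * t))) = (\<lambda>h. h *\<^sub>R (\<i> * of_real \<omega> * cis (\<omega> * t)))"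
    by (auto simp: scaleR_conv_of_real algebra_simps)
  ultimately have "((\<lambda>t. cis (\<omega> * t)) has_vector_derivative (\<i> * of_real \<omega> * cis (\<omega> * t))) (at t)"
    unfolding has_vector_derivative_def by simp
  then show ?thesis by (rule has_vector_derivative_mult_right)
qed

lemma Kq: assumes "p \<noteq> 0"
  shows "perp (p - q) / of_real ((cmod (p - q))\<^sup>2) = (\<i> / cnj p) * cnj (p / (p - q))"
proof (cases "p = q")
  case True then show ?thesis by (simp add: perp_def)
next
  case False
  then have a: "p - q \<noteq> 0" "cnj (p - q) \<noteq> 0" by auto
  have b: "cnj p \<noteq> 0" using assms by simp
  have "perp (p - q) / of_real ((cmod (p - q))\<^sup>2) = \<i> * (p - q) / ((p - q) * cnj (p - q))"
    unfolding perp_def complex_norm_square by (rule refl)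
  also have "\<dots> = \<i> / cnj (p - q)" using a by simp
  also have "\<dots> = (\<i> / cnj p) * cnj (p / (p - q))" using a b by (simp add: field_simps)
  finally show ?thesis .
qed


lemma rhs_formula:
  fixes q :: "nat \<Rightarrow> complex" and d :: "nat \<Rightarrow> real"
  assumes p: "q i \<noteq> 0" and i: "i \<in> {1..N}"
    and W: "(\<Sum>j\<in>{1..N}. of_real (d i * d j) * (q i / (q i - q j))) = of_real w"
  shows "pv_rhs A DA S N d q i =
     \<i> * q i * of_real ((1 - DA (S (sph_angle (q i))) + 2 * w) / (A (S (sph_angle (q i))))\<^sup>2)"
proof -
  define p where "p = q i"
  define a where "a = A (S (sph_angle p))"
  define a' where "a' = DA (S (sph_angle p))"
  have pz: "p \<noteq> 0" "cnj p \<noteq> 0" using p by (auto simp: p_def)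
  let ?T = "\<lambda>j. of_real (d i * d j) * perp (p - q j) / of_real ((cmod (p - q j))\<^sup>2)"
  have Ti: "?T i = 0" by (simp add: p_def perp_def)
  have s1: "(\<Sum>j\<in>{1..N} - {i}. ?T j) = (\<Sum>j\<in>{1..N}. ?T j)"
    using sum_diff1[of "{1..N}" ?T i] i Ti by simp
  have s2: "(\<Sum>j\<in>{1..N}. ?T j) = (\<i> / cnj p) * cnj (\<Sum>j\<in>{1..N}. of_real (d i * d j) * (p / (p - q j)))"
    unfolding sum_distrib_left cnj_sum
  proof (rule sum.cong[OF refl])
    fix j
    have "?T j = of_real (d i * d j) * (perp (p - q j) / of_real ((cmod (p - q j))\<^sup>2))"
      by (simp only: times_divide_eq_right)
    also have "\<dots> = of_real (d i * d j) * ((\<i> / cnj p) * cnj (p / (p - q j)))"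
      by (simp only: Kq[OF pz(1)])
    also have "\<dots> = (\<i> / cnj p) * cnj (of_real (d i * d j) * (p / (p - q j)))"
      by simp
    finally show "?T j = (\<i> / cnj p) * cnj (of_real (d i * d j) * (p / (p - q j)))" .
  qed
  have s3: "perp p / of_real ((cmod p)\<^sup>2) = \<i> / cnj p"
    using Kq[OF pz(1), of 0] pz by simp
  have "pv_rhs A DA S N d q i = of_real ((cmod p)\<^sup>2 / a\<^sup>2) *
      (of_real (1 - a') * perp p / of_real ((cmod p)\<^sup>2) + 2 * (\<Sum>j\<in>{1..N} - {i}. ?T j))"
    unfolding pv_rhs_def p_def a_def a'_def by simp
  also have "\<dots> = of_real ((cmod p)\<^sup>2 / a\<^sup>2) * ((\<i> / cnj p) * of_real (1 - a' + 2 * w))"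
  proof -
    have hW: "cnj (\<Sum>j\<in>{1..N}. of_real (d i * d j) * (p / (p - q j))) = of_real w"
      using W by (simp add: p_def)
    have "of_real (1 - a') * perp p / of_real ((cmod p)\<^sup>2) = of_real (1 - a') * (perp p / of_real ((cmod p)\<^sup>2))"
      by (simp only: times_divide_eq_right)
    also have "\<dots> = of_real (1 - a') * (\<i> / cnj p)" by (simp only: s3)
    finally have e1: "of_real (1 - a') * perp p / of_real ((cmod p)\<^sup>2) = of_real (1 - a') * (\<i> / cnj p)" .
    have alg: "\<And>x::complex. \<And>u. of_real u * x + 2 * (x * of_real w) = x * of_real (u + 2 * w)"
      by (simp add: algebra_simps)
    show ?thesis unfolding s1 s2 hW e1 alg by (rule refl)
  qed
  also have "\<dots> = \<i> * p * of_real ((1 - a' + 2 * w) / a\<^sup>2)"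
  proof -
    have e: "complex_of_real ((cmod p)\<^sup>2 / a\<^sup>2) = (p * cnj p) / of_real (a\<^sup>2)"
      by (simp only: of_real_divide complex_norm_square)
    have e2: "complex_of_real ((1 - a' + 2 * w) / a\<^sup>2) = of_real (1 - a' + 2 * w) / of_real (a\<^sup>2)"
      by (simp only: of_real_divide)
    have e3: "(p * cnj p) * (\<i> / cnj p) = \<i> * p" using pz by simp
    show ?thesis unfolding e e2
      using pz by (cases "a = 0") (simp_all add: field_simps)
  qed
  finally show ?thesis by (simp add: p_def a_def a'_def)
qed

lemma pv_solution:
  fixes A DA S :: "real \<Rightarrow> real"
  assumes n: "1 \<le> n" and r1: "0 < r1" and r2: "0 < r2" and neq: "r1 \<noteq> r2"
    and h1: "\<And>z. cmod z = r1 \<Longrightarrow> A (S (sph_angle z)) = a \<and> DA (S (sph_angle z)) = a1"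
    and h2: "\<And>z. cmod z = r2 \<Longrightarrow> A (S (sph_angle z)) = a \<and> DA (S (sph_angle z)) = - a1"
  shows "\<exists>\<omega>. is_pv_solution A DA S (2*n) (deg n) (rot_config n r1 r2 \<omega>)"
proof -
  have n0: "n > 0" using n by simp
  define x where "x = Re (XX n (r2/r1))"
  have Xa: "XX n (r2/r1) = of_real x" using XX_of_real[OF n0] x_def by simp
  have Xb: "XX n (r1/r2) = of_real (real n - x)"
  proof -
    have ne1: "r2 / r1 \<noteq> 1" using neq r1 by simp
    have "XX n (r2/r1) + XX n (1/(r2/r1)) = of_nat n"
      by (rule XX_pair[OF n0]) (use r1 r2 ne1 in simp_all)
    then have "XX n (r1/r2) = of_nat n - of_real x" using Xa by (simp add: eq_diff_eq add.commute)
    then show ?thesis by simp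
  qed
  have X1: "XX n 1 = of_real ((real n - 1)/2)" by (rule XX_one[OF n0])
  define \<omega> where "\<omega> = (1 - a1 + 2 * ((real n - 1)/2 - x)) / a\<^sup>2"
  show ?thesis
  proof (rule exI[of _ \<omega>], unfold is_pv_solution_def, intro allI ballI)
    fix t i assume i: "i \<in> {1..2*n}"
    let ?q = "\<lambda>j. rot_config n r1 r2 \<omega> j t"
    let ?E = "cis (\<omega> * t)"
    have E: "?E \<noteq> 0" by simp
    have qa: "\<And>k. k < n \<Longrightarrow> ?q (k+1) = of_real r1 * cc n (real k) * ?E" using rot1 by simp
    have qb: "\<And>k. k < n \<Longrightarrow> ?q (n+k+1) = of_real r2 * cc n (real k) * ?E"
      using rot2 by (metis add.assoc add_diff_cancel_left' diff_add_inverse2 less_add_one trans_less_add1)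
    have qa': "\<And>k. k < n \<Longrightarrow> ?q (Suc k) = of_real r1 * cc n (real k) * ?E" using qa by simp
    have qb': "\<And>k. k < n \<Longrightarrow> ?q (Suc (n+k)) = of_real r2 * cc n (real k) * ?E" using qb by simp
    show "\<exists>v. ((\<lambda>t. rot_config n r1 r2 \<omega> i t) has_vector_derivative v) (at t) \<and>
          of_real (deg n i) * v = pv_rhs A DA S (2*n) (deg n) ?q i"
    proof (cases "i \<le> n")
      case True
      define m where "m = i - 1"
      have m: "m < n" "i = m + 1" using i True by (auto simp: m_def)
      let ?p = "of_real r1 * cc n (real m) * ?E"
      have fq: "(\<lambda>t. rot_config n r1 r2 \<omega> i t) = (\<lambda>t. (of_real r1 * cc n (real m)) * cis (\<omega> * t))"
        using rot1 m by auto
      have p: "?q i = ?p" using qa m by simp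
      have cm: "cmod (?q i) = r1" unfolding p using r1 by (simp add: norm_mult)
      have W: "(\<Sum>j\<in>{1..2*n}. of_real (deg n i * deg n j) * (?q i / (?q i - ?q j))) = of_real ((real n - 1)/2 - x)"
      proof -
        have "(\<Sum>j\<in>{1..2*n}. of_real (deg n i * deg n j) * (?q i / (?q i - ?q j)))
           = (\<Sum>k<n. of_real (deg n i * deg n (k+1)) * (?q i / (?q i - ?q (k+1))))
           + (\<Sum>k<n. of_real (deg n i * deg n (n+k+1)) * (?q i / (?q i - ?q (n+k+1))))"
          by (rule sum_split2)
        also have "\<dots> = (\<Sum>k<n. ?p / (?p - of_real r1 * cc n (real k) * ?E))
                      + (\<Sum>k<n. - (?p / (?p - of_real r2 * cc n (real k) * ?E)))"
          using True by (intro arg_cong2[where f = "(+)"] sum.cong) (auto simp: deg_def qa qb qa' qb' p)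
        also have "\<dots> = XX n (r1/r1) - XX n (r2/r1)"
          using ring_sum[OF n0 m(1) r1 E] by (simp add: sum_negf)
        finally show ?thesis using X1 Xa r1 by simp
      qed
      have rhs: "pv_rhs A DA S (2*n) (deg n) ?q i = \<i> * ?q i * of_real ((1 - a1 + 2 * ((real n - 1)/2 - x)) / a\<^sup>2)"
        using rhs_formula[of ?q i "2*n" "deg n" _ A DA S, OF _ i W] h1[OF cm] p r1 by simp
      show ?thesis
        unfolding fq
        by (rule exI, rule conjI, rule deriv_rot) (unfold rhs p, simp add: deg_def True \<omega>_def mult_ac)
    next
      case False
      define m where "m = i - n - 1"
      have m: "m < n" "i = n + m + 1" using i False by (auto simp: m_def)
      let ?p = "of_real r2 * cc n (real m) * ?E"
      have fq: "(\<lambda>t. rot_config n r1 r2 \<omega> i t) = (\<lambda>t. (of_real r2 * cc n (real m)) * cis (\<omega> * t))"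
        using False by (intro ext) (simp add: rot2 m_def)
      have p: "?q i = ?p" using qb m by simp
      have cm: "cmod (?q i) = r2" unfolding p using r2 by (simp add: norm_mult)
      have W: "(\<Sum>j\<in>{1..2*n}. of_real (deg n i * deg n j) * (?q i / (?q i - ?q j))) = of_real ((real n - 1)/2 - (real n - x))"
      proof -
        have "(\<Sum>j\<in>{1..2*n}. of_real (deg n i * deg n j) * (?q i / (?q i - ?q j)))
           = (\<Sum>k<n. of_real (deg n i * deg n (k+1)) * (?q i / (?q i - ?q (k+1))))
           + (\<Sum>k<n. of_real (deg n i * deg n (n+k+1)) * (?q i / (?q i - ?q (n+k+1))))"
          by (rule sum_split2)
        also have "\<dots> = (\<Sum>k<n. - (?p / (?p - of_real r1 * cc n (real k) * ?E)))
                      + (\<Sum>k<n. ?p / (?p - of_real r2 * cc n (real k) * ?E))"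
          using False by (intro arg_cong2[where f = "(+)"] sum.cong) (auto simp: deg_def qa qb qa' qb' p)
        also have "\<dots> = - XX n (r1/r2) + XX n (r2/r2)"
          using ring_sum[OF n0 m(1) r2 E] by (simp add: sum_negf)
        finally show ?thesis using X1 Xb r2 by simp
      qed
      have rhs: "pv_rhs A DA S (2*n) (deg n) ?q i = \<i> * ?q i * of_real ((1 - - a1 + 2 * ((real n - 1)/2 - (real n - x))) / a\<^sup>2)"
        using rhs_formula[of ?q i "2*n" "deg n" _ A DA S, OF _ i W] h2[OF cm] p r2 by simp
      have om: "- \<omega> = (1 - - a1 + 2 * ((real n - 1)/2 - (real n - x))) / a\<^sup>2"
        unfolding \<omega>_def minus_divide_left
        by (rule arg_cong[where f = "\<lambda>u. u / a\<^sup>2"]) (simp add: algebra_simps)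
      show ?thesis
        unfolding fq
        by (rule exI, rule conjI, rule deriv_rot) (unfold rhs p om[symmetric], simp add: deg_def False mult_ac)
    qed
  qed
qed

lemma deriv_interior:
  assumes "\<And>s. s \<in> {0..l} \<Longrightarrow> (f has_real_derivative f' s) (at s within {0..l})"
    and "s \<in> {0<..<(l::real)}"
  shows "(f has_real_derivative f' s) (at s)"
proof -
  have "(f has_real_derivative f' s) (at s within {0<..<l})"
    by (rule DERIV_subset[OF assms(1)]) (use assms(2) in auto)
  moreover have "at s within {0<..<l} = at s" by (rule at_within_open) (use assms(2) in auto)
  ultimately show ?thesis by simp
qed

lemma cont_from_deriv:
  assumes "\<And>s. s \<in> {0..l} \<Longrightarrow> (f has_real_derivative f' s) (at s within {0..l})"
  shows "continuous_on {0..(l::real)} f"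
  using assms by (rule DERIV_continuous_on)

lemma strict_inc:
  assumes d: "\<And>s. s \<in> {0..l} \<Longrightarrow> (f has_real_derivative f' s) (at s within {0..l})"
    and pos: "\<And>s. s \<in> {x..y} \<Longrightarrow> f' s > 0"
    and xy: "0 \<le> x" "x < y" "y \<le> (l::real)"
  shows "f x < f y"
proof (rule DERIV_pos_imp_increasing_open[OF xy(2)])
  fix s assume "x < s" "s < y"
  then show "\<exists>y. (f has_real_derivative y) (at s) \<and> 0 < y"
    using deriv_interior[OF d, of s] pos[of s] xy by auto
next
  show "continuous_on {x..y} f"
    by (rule continuous_on_subset[OF DERIV_continuous_on[of "{0..l}" f f', OF d]]) (use xy in auto)
qed

lemma strict_dec:
  assumes d: "\<And>s. s \<in> {0..l} \<Longrightarrow> (f has_real_derivative f' s) (at s within {0..l})"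
    and neg: "\<And>s. s \<in> {x..y} \<Longrightarrow> f' s < 0"
    and xy: "0 \<le> x" "x < y" "y \<le> (l::real)"
  shows "f x > f y"
proof (rule DERIV_neg_imp_decreasing_open[OF xy(2)])
  fix s assume "x < s" "s < y"
  then show "\<exists>y. (f has_real_derivative y) (at s) \<and> y < 0"
    using deriv_interior[OF d, of s] neg[of s] xy by auto
next
  show "continuous_on {x..y} f"
    by (rule continuous_on_subset[OF DERIV_continuous_on[of "{0..l}" f f', OF d]]) (use xy in auto)
qed

lemma cont_point:
  fixes f :: "real \<Rightarrow> real"
  assumes "continuous_on {0..(l::real)} f" "x \<in> {0..l}" "e > 0"
  shows "\<exists>d>0. \<forall>s\<in>{0..l}. \<bar>s - x\<bar> < d \<longrightarrow> \<bar>f s - f x\<bar> < e"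
proof -
  have "\<forall>x\<in>{0..l}. \<forall>e>0. \<exists>d>0. \<forall>x'\<in>{0..l}. dist x' x < d \<longrightarrow> dist (f x') (f x) < e"
    using assms(1) by (simp only: continuous_on_iff)
  then have "\<exists>d>0. \<forall>x'\<in>{0..l}. dist x' x < d \<longrightarrow> dist (f x') (f x) < e"
    using assms(2,3) by blast
  then show ?thesis by (simp only: dist_real_def)
qed

lemma alg_pq:
  fixes P Q b1 b2 :: real
  assumes "P > 0" "Q < 0" "P\<^sup>2 + b1\<^sup>2 = 1" "Q\<^sup>2 + b2\<^sup>2 = 1" "- b1 = b2 * (inverse Q * P)"
  shows "Q = - P"
proof -
  have e: "- b1 * Q = b2 * P" using assms(2,5) by (simp add: field_simps)
  have "(- b1 * Q)\<^sup>2 = (b2 * P)\<^sup>2" using e by simp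
  then have e2: "b1\<^sup>2 * Q\<^sup>2 = b2\<^sup>2 * P\<^sup>2" by (simp add: power_mult_distrib)
  have "b1\<^sup>2 = 1 - P\<^sup>2" "b2\<^sup>2 = 1 - Q\<^sup>2" using assms(3,4) by linarith+
  with e2 have "(1 - P\<^sup>2) * Q\<^sup>2 = (1 - Q\<^sup>2) * P\<^sup>2" by simp
  then have "Q\<^sup>2 = P\<^sup>2" by (simp add: algebra_simps)
  then have "(- Q)\<^sup>2 = P\<^sup>2" by simp
  then have "- Q = P" using assms(1,2) by (subst (asm) power2_eq_iff_nonneg) auto
  then show ?thesis by simp
qed

lemma geom:
  fixes l :: real and \<alpha> \<beta> :: "real \<Rightarrow> real" and D\<alpha> D\<beta> :: "nat \<Rightarrow> real \<Rightarrow> real"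
  assumes l_pos: "0 < l"
    and D\<alpha>0: "D\<alpha> 0 = \<alpha>" and D\<beta>0: "D\<beta> 0 = \<beta>"
    and smooth_\<alpha>: "\<And>k s. s \<in> {0..l} \<Longrightarrow> (D\<alpha> k has_real_derivative D\<alpha> (Suc k) s) (at s within {0..l})"
    and smooth_\<beta>: "\<And>k s. s \<in> {0..l} \<Longrightarrow> (D\<beta> k has_real_derivative D\<beta> (Suc k) s) (at s within {0..l})"
    and arclength: "\<And>s. s \<in> {0..l} \<Longrightarrow> (D\<alpha> 1 s)\<^sup>2 + (D\<beta> 1 s)\<^sup>2 = 1"
    and \<alpha>_pos: "\<And>s. s \<in> {0<..<l} \<Longrightarrow> 0 < \<alpha> s"
    and \<alpha>_ends: "\<alpha> 0 = 0" "\<alpha> l = 0"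
    and \<beta>'_ends: "D\<beta> 1 0 = 0" "D\<beta> 1 l = 0"
    and symmetric: "\<And>x. x \<in> surfM \<alpha> \<beta> l \<Longrightarrow> reflXY x \<in> surfM \<alpha> \<beta> l"
  shows "\<exists>u v. u \<in> {0<..<l} \<and> v \<in> {0<..<l} \<and> u \<noteq> v \<and> \<alpha> v = \<alpha> u \<and> \<beta> v = - \<beta> u \<and> D\<alpha> 1 v = - D\<alpha> 1 u"
proof -
  define A' where "A' = D\<alpha> 1"
  define B' where "B' = D\<beta> 1"
  have dA: "\<And>s. s \<in> {0..l} \<Longrightarrow> (\<alpha> has_real_derivative A' s) (at s within {0..l})"
    using smooth_\<alpha>[of _ 0] by (simp add: D\<alpha>0 A'_def)
  have dA': "\<And>s. s \<in> {0..l} \<Longrightarrow> (A' has_real_derivative D\<alpha> (Suc 1) s) (at s within {0..l})"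
    using smooth_\<alpha>[of _ 1] by (simp add: A'_def)
  have dB: "\<And>s. s \<in> {0..l} \<Longrightarrow> (\<beta> has_real_derivative B' s) (at s within {0..l})"
    using smooth_\<beta>[of _ 0] by (simp add: D\<beta>0 B'_def)
  have contA: "continuous_on {0..l} \<alpha>" by (rule DERIV_continuous_on[of "{0..l}" \<alpha> A', OF dA])
  have contA': "continuous_on {0..l} A'" by (rule DERIV_continuous_on[of "{0..l}" A' "D\<alpha> (Suc 1)", OF dA'])
  have arc: "\<And>s. s \<in> {0..l} \<Longrightarrow> (A' s)\<^sup>2 + (B' s)\<^sup>2 = 1" using arclength by (simp add: A'_def B'_def)
  have \<alpha>_nn: "\<And>s. s \<in> {0..l} \<Longrightarrow> 0 \<le> \<alpha> s"
  proof -
    fix s assume s: "s \<in> {0..l}"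
    show "0 \<le> \<alpha> s"
    proof (cases "s = 0 \<or> s = l")
      case True then show ?thesis using \<alpha>_ends by auto
    next
      case False then have "s \<in> {0<..<l}" using s by auto
      then show ?thesis using \<alpha>_pos[of s] by simp
    qed
  qed
  have partner: "\<And>s. s \<in> {0..l} \<Longrightarrow> \<exists>t\<in>{0..l}. \<alpha> t = \<alpha> s \<and> \<beta> t = - \<beta> s"
  proof -
    fix s assume s: "s \<in> {0..l}"
    have "(\<alpha> s * cos 0, \<alpha> s * sin 0, \<beta> s) \<in> surfM \<alpha> \<beta> l" unfolding surfM_def using s by blast
    then have "reflXY (\<alpha> s * cos 0, \<alpha> s * sin 0, \<beta> s) \<in> surfM \<alpha> \<beta> l" by (rule symmetric)
    then obtain t \<theta> where t: "t \<in> {0..l}" and eq: "(\<alpha> s, 0, - \<beta> s) = (\<alpha> t * cos \<theta>, \<alpha> t * sin \<theta>, \<beta> t)"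
      unfolding surfM_def reflXY_def by auto
    then have e1: "\<alpha> s = \<alpha> t * cos \<theta>" "0 = \<alpha> t * sin \<theta>" "- \<beta> s = \<beta> t" by auto
    have "(\<alpha> s)\<^sup>2 = (\<alpha> t * cos \<theta>)\<^sup>2 + (\<alpha> t * sin \<theta>)\<^sup>2" using e1 by simp
    also have "\<dots> = (\<alpha> t)\<^sup>2 * ((cos \<theta>)\<^sup>2 + (sin \<theta>)\<^sup>2)" by (simp only: power_mult_distrib distrib_left)
    also have "\<dots> = (\<alpha> t)\<^sup>2" by simp
    finally have "(\<alpha> t)\<^sup>2 = (\<alpha> s)\<^sup>2" by simp
    then have "\<alpha> t = \<alpha> s" using \<alpha>_nn[OF s] \<alpha>_nn[OF t] by simp
    then show "\<exists>t\<in>{0..l}. \<alpha> t = \<alpha> s \<and> \<beta> t = - \<beta> s" using t e1 by auto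
  qed
  have A0: "A' 0 = 1"
  proof (rule ccontr)
    assume ne: "A' 0 \<noteq> 1"
    have "(A' 0)\<^sup>2 = 1" using arc[of 0] l_pos \<beta>'_ends(1) by (simp add: B'_def)
    then have m1: "A' 0 = -1" using ne by (simp add: power2_eq_1_iff)
    obtain d where d: "d > 0" "\<forall>s\<in>{0..l}. \<bar>s - 0\<bar> < d \<longrightarrow> \<bar>A' s - A' 0\<bar> < 1"
      using cont_point[OF contA', of 0 1] l_pos by auto
    define s0 where "s0 = min (d/2) l"
    have s0: "0 < s0" "s0 \<le> l" "s0 < d" using d l_pos by (auto simp: s0_def)
    have "\<alpha> 0 > \<alpha> s0"
    proof (rule strict_dec[OF dA])
      fix s assume "s \<in> {0..s0}"
      then have "s \<in> {0..l}" "\<bar>s - 0\<bar> < d" using s0 by auto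
      then have "\<bar>A' s - A' 0\<bar> < 1" using d by blast
      then show "A' s < 0" using m1 abs_less_iff[of "A' s - A' 0" 1] by linarith
    qed (use s0 in auto)
    then show False using \<alpha>_nn[of s0] s0 \<alpha>_ends by auto
  qed
  have Al: "A' l = -1"
  proof (rule ccontr)
    assume ne: "A' l \<noteq> -1"
    have "(A' l)\<^sup>2 = 1" using arc[of l] l_pos \<beta>'_ends(2) by (simp add: B'_def)
    then have m1: "A' l = 1" using ne by (simp add: power2_eq_1_iff)
    obtain d where d: "d > 0" "\<forall>s\<in>{0..l}. \<bar>s - l\<bar> < d \<longrightarrow> \<bar>A' s - A' l\<bar> < 1"
      using cont_point[OF contA', of l 1] l_pos by auto
    define s0 where "s0 = max (l - d/2) 0"
    have s0: "0 \<le> s0" "s0 < l" "l - s0 < d" using d l_pos by (auto simp: s0_def)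
    have "\<alpha> s0 < \<alpha> l"
    proof (rule strict_inc[OF dA])
      fix s assume "s \<in> {s0..l}"
      then have "s \<in> {0..l}" "\<bar>s - l\<bar> < d" using s0 by auto
      then have "\<bar>A' s - A' l\<bar> < 1" using d by blast
      then show "A' s > 0" using m1 abs_less_iff[of "A' s - A' l" 1] by linarith
    qed (use s0 in auto)
    then show False using \<alpha>_nn[of s0] s0 \<alpha>_ends by auto
  qed
  obtain d0 where d0: "d0 > 0" "\<forall>s\<in>{0..l}. \<bar>s - 0\<bar> < d0 \<longrightarrow> \<bar>A' s - A' 0\<bar> < 1/2"
    using cont_point[OF contA', of 0 "1/2"] l_pos by auto
  obtain d1 where d1: "d1 > 0" "\<forall>s\<in>{0..l}. \<bar>s - l\<bar> < d1 \<longrightarrow> \<bar>A' s - A' l\<bar> < 1/2"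
    using cont_point[OF contA', of l "1/2"] l_pos by auto
  define \<epsilon> where "\<epsilon> = min (min d0 d1) l / 3"
  have \<epsilon>: "0 < \<epsilon>" "\<epsilon> < d0" "\<epsilon> < d1" "3 * \<epsilon> \<le> l" using d0 d1 l_pos by (auto simp: \<epsilon>_def)
  have Apos: "\<And>s. s \<in> {0..\<epsilon>} \<Longrightarrow> A' s > 1/2"
  proof -
    fix s assume s: "s \<in> {0..\<epsilon>}"
    then have "s \<in> {0..l}" "\<bar>s - 0\<bar> < d0" using \<epsilon> by auto
    then have "\<bar>A' s - A' 0\<bar> < 1/2" using d0 by blast
    then show "A' s > 1/2" using A0 abs_less_iff[of "A' s - A' 0" "1/2"] by linarith
  qed
  have Aneg: "\<And>s. s \<in> {l-\<epsilon>..l} \<Longrightarrow> A' s < -1/2"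
  proof -
    fix s assume s: "s \<in> {l-\<epsilon>..l}"
    then have "s \<in> {0..l}" "\<bar>s - l\<bar> < d1" using \<epsilon> by auto
    then have "\<bar>A' s - A' l\<bar> < 1/2" using d1 by blast
    then show "A' s < -1/2" using Al abs_less_iff[of "A' s - A' l" "1/2"] by linarith
  qed
  have inc: "\<And>x y. 0 \<le> x \<Longrightarrow> x < y \<Longrightarrow> y \<le> \<epsilon> \<Longrightarrow> \<alpha> x < \<alpha> y"
  proof -
    fix x y :: real assume xy: "0 \<le> x" "x < y" "y \<le> \<epsilon>"
    show "\<alpha> x < \<alpha> y"
      by (rule strict_inc[OF dA]) (use xy \<epsilon> Apos in \<open>auto intro: less_trans[of 0 "1/2"]\<close>)
  qed
  have dec: "\<And>x y. l - \<epsilon> \<le> x \<Longrightarrow> x < y \<Longrightarrow> y \<le> l \<Longrightarrow> \<alpha> x > \<alpha> y"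
  proof -
    fix x y :: real assume xy: "l - \<epsilon> \<le> x" "x < y" "y \<le> l"
    show "\<alpha> x > \<alpha> y"
      by (rule strict_dec[OF dA]) (use xy \<epsilon> Aneg in \<open>auto intro: less_trans[of _ "-1/2" 0]\<close>)
  qed
  have inj1: "\<And>x y. x \<in> {0..\<epsilon>} \<Longrightarrow> y \<in> {0..\<epsilon>} \<Longrightarrow> \<alpha> x = \<alpha> y \<Longrightarrow> x = y"
  proof -
    fix x y assume xy: "x \<in> {0..\<epsilon>}" "y \<in> {0..\<epsilon>}" "\<alpha> x = \<alpha> y"
    show "x = y"
    proof (rule ccontr)
      assume "x \<noteq> y"
      then consider "x < y" | "y < x" by linarith
      then show False
      proof cases
        case 1 then show False using inc[of x y] xy by auto
      next
        case 2 then show False using inc[of y x] xy by auto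
      qed
    qed
  qed
  have inj2: "\<And>x y. x \<in> {l-\<epsilon>..l} \<Longrightarrow> y \<in> {l-\<epsilon>..l} \<Longrightarrow> \<alpha> x = \<alpha> y \<Longrightarrow> x = y"
  proof -
    fix x y assume xy: "x \<in> {l-\<epsilon>..l}" "y \<in> {l-\<epsilon>..l}" "\<alpha> x = \<alpha> y"
    show "x = y"
    proof (rule ccontr)
      assume "x \<noteq> y"
      then consider "x < y" | "y < x" by linarith
      then show False
      proof cases
        case 1 then show False using dec[of x y] xy by auto
      next
        case 2 then show False using dec[of y x] xy by auto
      qed
    qed
  qed
  obtain xm where xm: "xm \<in> {\<epsilon>..l-\<epsilon>}" "\<forall>y\<in>{\<epsilon>..l-\<epsilon>}. \<alpha> xm \<le> \<alpha> y"
  proof -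
    have "\<exists>x\<in>{\<epsilon>..l-\<epsilon>}. \<forall>y\<in>{\<epsilon>..l-\<epsilon>}. \<alpha> x \<le> \<alpha> y"
      by (rule continuous_attains_inf) (use \<epsilon> in \<open>auto intro: continuous_on_subset[OF contA]\<close>)
    then show ?thesis using that by blast
  qed
  define \<delta>0 where "\<delta>0 = \<alpha> xm"
  have \<delta>0: "\<delta>0 > 0" unfolding \<delta>0_def using xm(1) \<epsilon> by (intro \<alpha>_pos) auto
  have far: "\<And>t. t \<in> {0..l} \<Longrightarrow> \<alpha> t < \<delta>0 \<Longrightarrow> t < \<epsilon> \<or> l - \<epsilon> < t"
  proof -
    fix t assume t: "t \<in> {0..l}" "\<alpha> t < \<delta>0"
    show "t < \<epsilon> \<or> l - \<epsilon> < t"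
    proof (rule ccontr)
      assume "\<not> (t < \<epsilon> \<or> l - \<epsilon> < t)"
      then have "t \<in> {\<epsilon>..l-\<epsilon>}" by auto
      then have "\<alpha> xm \<le> \<alpha> t" using xm by blast
      then show False using t unfolding \<delta>0_def by simp
    qed
  qed
  obtain d2 where d2: "d2 > 0" "\<forall>s\<in>{0..l}. \<bar>s - 0\<bar> < d2 \<longrightarrow> \<bar>\<alpha> s - \<alpha> 0\<bar> < \<delta>0"
    using cont_point[OF contA, of 0 \<delta>0] l_pos \<delta>0 by auto
  define \<epsilon>' where "\<epsilon>' = min \<epsilon> (d2/2)"
  have \<epsilon>': "0 < \<epsilon>'" "\<epsilon>' \<le> \<epsilon>" "\<epsilon>' < d2" using \<epsilon> d2 by (auto simp: \<epsilon>'_def)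
  have small: "\<And>v. v \<in> {0<..<\<epsilon>'} \<Longrightarrow> 0 < \<alpha> v \<and> \<alpha> v < \<delta>0"
  proof -
    fix v assume v: "v \<in> {0<..<\<epsilon>'}"
    then have "v \<in> {0..l}" "\<bar>v - 0\<bar> < d2" using \<epsilon>' \<epsilon> by auto
    then have "\<bar>\<alpha> v - \<alpha> 0\<bar> < \<delta>0" using d2 by blast
    moreover have "0 < \<alpha> v" using v \<epsilon>' \<epsilon> by (intro \<alpha>_pos) auto
    ultimately show "0 < \<alpha> v \<and> \<alpha> v < \<delta>0" using \<alpha>_ends by simp
  qed
  define L where "L = \<alpha> (l - \<epsilon>)"
  have L: "\<delta>0 \<le> L" unfolding L_def \<delta>0_def using xm(2) \<epsilon> by auto
  have gex: "\<And>y. y \<in> {0..L} \<Longrightarrow> \<exists>t. t \<in> {l-\<epsilon>..l} \<and> \<alpha> t = y"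
  proof -
    fix y assume y: "y \<in> {0..L}"
    have "\<exists>t. l - \<epsilon> \<le> t \<and> t \<le> l \<and> \<alpha> t = y"
      by (rule IVT2') (use y \<epsilon> \<alpha>_ends in \<open>auto simp: L_def intro: continuous_on_subset[OF contA]\<close>)
    then show "\<exists>t. t \<in> {l-\<epsilon>..l} \<and> \<alpha> t = y" by auto
  qed
  define g where "g y = (THE t. t \<in> {l-\<epsilon>..l} \<and> \<alpha> t = y)" for y
  have g: "\<And>y. y \<in> {0..L} \<Longrightarrow> g y \<in> {l-\<epsilon>..l} \<and> \<alpha> (g y) = y"
  proof -
    fix y assume y: "y \<in> {0..L}"
    have "\<exists>!t. t \<in> {l-\<epsilon>..l} \<and> \<alpha> t = y" using gex[OF y] inj2 by blast
    then show "g y \<in> {l-\<epsilon>..l} \<and> \<alpha> (g y) = y" unfolding g_def by (rule theI')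
  qed
  have ginv: "\<And>t. t \<in> {l-\<epsilon>..l} \<Longrightarrow> g (\<alpha> t) = t"
  proof -
    fix t assume t: "t \<in> {l-\<epsilon>..l}"
    show "g (\<alpha> t) = t" unfolding g_def
      by (rule the_equality) (use t inj2 in auto)
  qed
  have gcont: "continuous_on (\<alpha> ` {l-\<epsilon>..l}) g"
    by (rule continuous_on_inv) (use ginv \<epsilon> in \<open>auto intro: continuous_on_subset[OF contA]\<close>)
  have sub: "{0<..<L} \<subseteq> \<alpha> ` {l-\<epsilon>..l}"
  proof
    fix y assume "y \<in> {0<..<L}"
    then have "g y \<in> {l-\<epsilon>..l} \<and> \<alpha> (g y) = y" using g by auto
    then show "y \<in> \<alpha> ` {l-\<epsilon>..l}" by (metis image_eqI)
  qed
  define h where "h v = g (\<alpha> v)" for v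
  have hprop: "\<And>v. v \<in> {0<..<\<epsilon>'} \<Longrightarrow> h v \<in> {l-\<epsilon>..l} \<and> \<alpha> (h v) = \<alpha> v"
    unfolding h_def using small L g by fastforce
  have hsym: "\<And>v. v \<in> {0<..<\<epsilon>'} \<Longrightarrow> \<beta> (h v) = - \<beta> v"
  proof -
    fix v assume v: "v \<in> {0<..<\<epsilon>'}"
    have v0: "v \<in> {0..l}" "v \<in> {0..\<epsilon>}" using v \<epsilon>' \<epsilon> by auto
    have hv: "h v \<in> {l-\<epsilon>..l}" "\<alpha> (h v) = \<alpha> v" using hprop[OF v] by auto
    have hv0: "h v \<in> {0..l}" using hv \<epsilon> by auto
    have av: "\<alpha> v < \<delta>0" using small[OF v] by simp
    obtain t where t: "t \<in> {0..l}" "\<alpha> t = \<alpha> v" "\<beta> t = - \<beta> v" using partner[OF v0(1)] by blast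
    show "\<beta> (h v) = - \<beta> v"
    proof (cases "l - \<epsilon> < t")
      case True
      then have "t \<in> {l-\<epsilon>..l}" using t by auto
      then have "h v = t" unfolding h_def using ginv t(2) by metis
      then show ?thesis using t by simp
    next
      case False
      then have "t < \<epsilon>" using far[OF t(1)] t(2) av by auto
      then have "t = v" using inj1[of t v] t v0 by auto
      then have b0: "\<beta> v = 0" using t by simp
      obtain t' where t': "t' \<in> {0..l}" "\<alpha> t' = \<alpha> (h v)" "\<beta> t' = - \<beta> (h v)" using partner[OF hv0] by blast
      show ?thesis
      proof (cases "l - \<epsilon> < t'")
        case True
        then have "t' \<in> {l-\<epsilon>..l}" using t' by auto
        then have "t' = h v" using inj2[of t' "h v"] t' hv by auto
        then show ?thesis using t' b0 by simp
      next
        case False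
        then have "t' < \<epsilon>" using far[OF t'(1)] t'(2) hv av by auto
        then have "t' = v" using inj1[of t' v] t' v0 hv by auto
        then show ?thesis using t' b0 by simp
      qed
    qed
  qed
  define u where "u = \<epsilon>' / 2"
  have u: "u \<in> {0<..<\<epsilon>'}" using \<epsilon>' by (auto simp: u_def)
  have u0: "u \<in> {0<..<l}" "u \<in> {0..\<epsilon>}" using u \<epsilon>' \<epsilon> by auto
  define y0 where "y0 = \<alpha> u"
  have y0: "0 < y0" "y0 < L" using small[OF u] L by (auto simp: y0_def)
  define v where "v = h u"
  have v: "v \<in> {l-\<epsilon>..l}" "\<alpha> v = \<alpha> u" using hprop[OF u] by (auto simp: v_def)
  have vl: "v \<noteq> l" using v y0 \<alpha>_ends by (auto simp: y0_def)
  have v0: "v \<in> {0<..<l}" using v vl \<epsilon> by auto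
  have gy0: "g y0 = v" by (simp add: v_def h_def y0_def)
  have dAv: "(\<alpha> has_real_derivative A' v) (at v)" by (rule deriv_interior[OF dA v0])
  have Av: "A' v < -1/2" using Aneg v by simp
  have isc: "isCont g y0"
  proof -
    have "continuous_on {0<..<L} g" using gcont sub by (rule continuous_on_subset)
    then show ?thesis using y0 by (simp add: continuous_on_eq_continuous_at)
  qed
  have dg: "(g has_real_derivative inverse (A' v)) (at y0)"
  proof (rule DERIV_inverse_function[where a = 0 and b = L])
    show "(\<alpha> has_real_derivative A' v) (at (g y0))" using dAv gy0 by simp
    show "A' v \<noteq> 0" using Av by simp
    show "0 < y0" "y0 < L" using y0 by auto
    show "\<And>y. 0 < y \<Longrightarrow> y < L \<Longrightarrow> \<alpha> (g y) = y" using g by auto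
    show "isCont g y0" by (rule isc)
  qed
  have dAu: "(\<alpha> has_real_derivative A' u) (at u)" by (rule deriv_interior[OF dA u0(1)])
  have dh: "(h has_real_derivative inverse (A' v) * A' u) (at u)"
  proof -
    have "((\<lambda>x. g (\<alpha> x)) has_real_derivative inverse (A' v) * A' u) (at u)"
      using DERIV_chain2[OF _ dAu, of g] dg by (simp add: y0_def)
    then show ?thesis by (simp add: h_def[abs_def])
  qed
  have dBv: "(\<beta> has_real_derivative B' v) (at v)" by (rule deriv_interior[OF dB v0])
  have dBh: "((\<lambda>x. \<beta> (h x)) has_real_derivative B' v * (inverse (A' v) * A' u)) (at u)"
    using DERIV_chain2[OF _ dh, of \<beta>] dBv by (simp add: v_def)
  have dBh': "((\<lambda>x. - \<beta> x) has_real_derivative B' v * (inverse (A' v) * A' u)) (at u)"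
    by (rule has_field_derivative_transform_within_open[OF dBh, of "{0<..<\<epsilon>'}"]) (use u hsym in auto)
  have dBu: "((\<lambda>x. - \<beta> x) has_real_derivative - B' u) (at u)"
    using deriv_interior[OF dB u0(1)] by (rule DERIV_minus)
  have eq: "- B' u = B' v * (inverse (A' v) * A' u)" using DERIV_unique[OF dBu dBh'] .
  have "A' v = - A' u"
  proof (rule alg_pq)
    show "A' u > 0" using Apos[OF u0(2)] by simp
    show "A' v < 0" using Av by simp
    show "(A' u)\<^sup>2 + (B' u)\<^sup>2 = 1" using arc u0 by auto
    show "(A' v)\<^sup>2 + (B' v)\<^sup>2 = 1" using arc v0 by auto
    show "- B' u = B' v * (inverse (A' v) * A' u)" by (rule eq)
  qed
  moreover have "u \<noteq> v" using u0 v \<epsilon> by auto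
  moreover have "\<beta> v = - \<beta> u" using hsym[OF u] by (simp add: v_def)
  ultimately show ?thesis using u0 v0 v unfolding A'_def by blast
qed

lemma rad:
  assumes "0 < \<phi>" "\<phi> < pi"
  shows "\<exists>r>0. \<forall>z. cmod z = r \<longrightarrow> sph_angle z = \<phi>"
proof -
  define c where "c = cos \<phi>"
  have s: "sin \<phi> > 0" using assms by (intro sin_gt_zero)
  have "(sin \<phi>)\<^sup>2 > 0" using s by simp
  then have "c\<^sup>2 < 1" using sin_cos_squared_add[of \<phi>] unfolding c_def by linarith
  then have "\<bar>c\<bar> < 1" by (simp add: abs_square_less_1)
  then have c: "-1 < c" "c < 1" by linarith+
  define r where "r = sqrt ((1 - c) / (1 + c))"
  have r2: "r\<^sup>2 = (1 - c) / (1 + c)" unfolding r_def using c by simp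
  have rpos: "r > 0" unfolding r_def using c by simp
  have e: "(1 - r\<^sup>2) / (1 + r\<^sup>2) = c"
    unfolding r2 using c by (simp add: field_simps)
  show ?thesis
  proof (intro exI conjI allI impI)
    show "r > 0" by (rule rpos)
    fix z :: complex assume "cmod z = r"
    then have "sph_angle z = arccos c" unfolding sph_angle_def using e by simp
    also have "\<dots> = \<phi>" unfolding c_def using assms by (intro arccos_cos) auto
    finally show "sph_angle z = \<phi>" .
  qed
qed

lemma S_hit:
  fixes S :: "real \<Rightarrow> real"
  assumes S_cont: "continuous_on {0..pi} S" and S_ends: "S 0 = 0" "S pi = l"
    and u: "u \<in> {0<..<l}"
  shows "\<exists>\<phi>. 0 < \<phi> \<and> \<phi> < pi \<and> S \<phi> = u"
proof -
  obtain \<phi> where p: "0 \<le> \<phi>" "\<phi> \<le> pi" "S \<phi> = u"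
    using IVT'[of S 0 u pi] S_cont S_ends u by auto
  have "\<phi> \<noteq> 0" "\<phi> \<noteq> pi" using p S_ends u by auto
  then have "0 < \<phi> \<and> \<phi> < pi \<and> S \<phi> = u" using p by auto
  then show ?thesis by blast
qed

lemma cfg_distinct:
  assumes n: "1 \<le> n" and r: "0 < r1" "0 < r2" "r1 \<noteq> r2"
    and i: "i \<in> {1..2*n}" and j: "j \<in> {1..2*n}" and ij: "i \<noteq> j"
  shows "rot_config n r1 r2 \<omega> i t \<noteq> rot_config n r1 r2 \<omega> j t"
proof
  assume eq: "rot_config n r1 r2 \<omega> i t = rot_config n r1 r2 \<omega> j t"
  have n0: "n > 0" using n by simp
  have same: False if "R > 0" "a < n" "b < n" "a \<noteq> b"
     "of_real R * cc n (real a) * cis (\<omega> * t) = of_real R * cc n (real b) * cis (\<omega> * t)" for R a b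
  proof -
    have "cc n (real a) = cc n (real b)" using that(1,5) by simp
    then have "cc n (real a - real b) = 1" by (simp add: cc_diff)
    moreover have "\<bar>real a - real b\<bar> < real n" using that(2,3) by linarith
    ultimately have "real a - real b = 0" using cc_eq_1[OF n0] by blast
    then show False using that(4) by simp
  qed
  show False
  proof (cases "i \<le> n")
    case True note iT = this
    show False
    proof (cases "j \<le> n")
      case True
      have ri: "rot_config n r1 r2 \<omega> i t = of_real r1 * cc n (real (i - 1)) * cis (\<omega> * t)"
        using iT i by (intro rot1) auto
      have rj: "rot_config n r1 r2 \<omega> j t = of_real r1 * cc n (real (j - 1)) * cis (\<omega> * t)"
        using True j by (intro rot1) auto
      show False by (rule same[of r1 "i - 1" "j - 1"]) (use eq ri rj iT True i j ij r in auto)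
    next
      case False
      have "cmod (rot_config n r1 r2 \<omega> i t) = r1" using rot1[of i n] iT i r by (simp add: norm_mult)
      moreover have "cmod (rot_config n r1 r2 \<omega> j t) = r2" using rot2[of n j] False r by (simp add: norm_mult)
      ultimately show False using eq r by simp
    qed
  next
    case False note iF = this
    show False
    proof (cases "j \<le> n")
      case True
      have "cmod (rot_config n r1 r2 \<omega> j t) = r1" using rot1[of j n] True j r by (simp add: norm_mult)
      moreover have "cmod (rot_config n r1 r2 \<omega> i t) = r2" using rot2[of n i] iF r by (simp add: norm_mult)
      ultimately show False using eq r by simp
    next
      case False
      have ri: "rot_config n r1 r2 \<omega> i t = of_real r2 * cc n (real (i - n - 1)) * cis (\<omega> * t)"
        using iF by (intro rot2) auto
      have rj: "rot_config n r1 r2 \<omega> j t = of_real r2 * cc n (real (j - n - 1)) * cis (\<omega> * t)"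
        using False by (intro rot2) auto
      show False by (rule same[of r2 "i - n - 1" "j - n - 1"]) (use eq ri rj iF False i j ij r in auto)
    qed
  qed
qed

theorem proposition1:
  fixes l :: real and \<alpha> \<beta> :: "real \<Rightarrow> real"
    and D\<alpha> D\<beta> :: "nat \<Rightarrow> real \<Rightarrow> real" and S :: "real \<Rightarrow> real" and n :: nat
  assumes l_pos: "0 < l"
    and D\<alpha>0: "D\<alpha> 0 = \<alpha>" and D\<beta>0: "D\<beta> 0 = \<beta>"
    and smooth_\<alpha>: "\<And>k s. s \<in> {0..l} \<Longrightarrow> (D\<alpha> k has_real_derivative D\<alpha> (Suc k) s) (at s within {0..l})"
    and smooth_\<beta>: "\<And>k s. s \<in> {0..l} \<Longrightarrow> (D\<beta> k has_real_derivative D\<beta> (Suc k) s) (at s within {0..l})"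
    and arclength: "\<And>s. s \<in> {0..l} \<Longrightarrow> (D\<alpha> 1 s)\<^sup>2 + (D\<beta> 1 s)\<^sup>2 = 1"
    and \<alpha>_pos: "\<And>s. s \<in> {0<..<l} \<Longrightarrow> 0 < \<alpha> s"
    and \<alpha>_ends: "\<alpha> 0 = 0" "\<alpha> l = 0"
    and \<beta>'_ends: "D\<beta> 1 0 = 0" "D\<beta> 1 l = 0"
    and S_cont: "continuous_on {0..pi} S"
    and S_range: "S ` {0..pi} \<subseteq> {0..l}"
    and S_ode: "\<And>\<phi>. \<phi> \<in> {0<..<pi} \<Longrightarrow>
                  \<exists>D. (S has_real_derivative D) (at \<phi>) \<and> D * sin \<phi> = \<alpha> (S \<phi>)"
    and S_ends: "S 0 = 0" "S pi = l"
    and symmetric: "\<And>x. x \<in> surfM \<alpha> \<beta> l \<Longrightarrow> reflXY x \<in> surfM \<alpha> \<beta> l"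
    and n_pos: "1 \<le> n"
  shows "\<exists>r1 r2 \<omega>0. 0 < r1 \<and> 0 < r2 \<and>
           (\<forall>t. \<forall>i\<in>{1..2*n}. \<forall>j\<in>{1..2*n}. i \<noteq> j \<longrightarrow>
               rot_config n r1 r2 \<omega>0 i t \<noteq> rot_config n r1 r2 \<omega>0 j t) \<and>
           is_pv_solution \<alpha> (D\<alpha> 1) S (2*n) (deg n) (rot_config n r1 r2 \<omega>0) \<and>
           Pmap \<alpha> \<beta> S ` {z. cmod z = r2} = reflXY ` (Pmap \<alpha> \<beta> S ` {z. cmod z = r1})"
proof -
  obtain u v where uv: "u \<in> {0<..<l}" "v \<in> {0<..<l}" "u \<noteq> v" "\<alpha> v = \<alpha> u" "\<beta> v = - \<beta> u"
      "D\<alpha> 1 v = - D\<alpha> 1 u"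
    using geom[OF l_pos D\<alpha>0 D\<beta>0 smooth_\<alpha> smooth_\<beta> arclength \<alpha>_pos \<alpha>_ends \<beta>'_ends symmetric] by blast
  obtain \<phi>1 where p1: "0 < \<phi>1" "\<phi>1 < pi" "S \<phi>1 = u" using S_hit[OF S_cont S_ends uv(1)] by blast
  obtain \<phi>2 where p2: "0 < \<phi>2" "\<phi>2 < pi" "S \<phi>2 = v" using S_hit[OF S_cont S_ends uv(2)] by blast
  obtain r1 where r1: "r1 > 0" "\<And>z. cmod z = r1 \<Longrightarrow> sph_angle z = \<phi>1" using rad[OF p1(1,2)] by blast
  obtain r2 where r2: "r2 > 0" "\<And>z. cmod z = r2 \<Longrightarrow> sph_angle z = \<phi>2" using rad[OF p2(1,2)] by blast
  have neq: "r1 \<noteq> r2"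
  proof
    assume "r1 = r2"
    moreover have c: "cmod (complex_of_real r1) = r1" using r1(1) by simp
    ultimately have "sph_angle (of_real r1) = \<phi>1" "sph_angle (of_real r1) = \<phi>2" using r1(2)[OF c] r2(2) by auto
    then have "\<phi>1 = \<phi>2" by simp
    then show False using p1 p2 uv(3) by simp
  qed
  have h1: "\<And>z. cmod z = r1 \<Longrightarrow> \<alpha> (S (sph_angle z)) = \<alpha> u \<and> D\<alpha> 1 (S (sph_angle z)) = D\<alpha> 1 u"
    using r1 p1 by simp
  have h2: "\<And>z. cmod z = r2 \<Longrightarrow> \<alpha> (S (sph_angle z)) = \<alpha> u \<and> D\<alpha> 1 (S (sph_angle z)) = - D\<alpha> 1 u"
    using r2 p2 uv by simp
  obtain \<omega> where om: "is_pv_solution \<alpha> (D\<alpha> 1) S (2*n) (deg n) (rot_config n r1 r2 \<omega>)"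
    using pv_solution[of n r1 r2 \<alpha> S "\<alpha> u" "D\<alpha> 1" "D\<alpha> 1 u", OF n_pos r1(1) r2(1) neq h1 h2] by blast
  have dist: "\<forall>t. \<forall>i\<in>{1..2*n}. \<forall>j\<in>{1..2*n}. i \<noteq> j \<longrightarrow>
               rot_config n r1 r2 \<omega> i t \<noteq> rot_config n r1 r2 \<omega> j t"
    using cfg_distinct[OF n_pos r1(1) r2(1) neq] by blast
  have P1: "\<And>z. cmod z = r1 \<Longrightarrow> reflXY (Pmap \<alpha> \<beta> S z) = (\<alpha> u * cos (Arg z), \<alpha> u * sin (Arg z), - \<beta> u)"
    using r1 p1 by (simp add: Pmap_def reflXY_def)
  have P2: "\<And>z. cmod z = r2 \<Longrightarrow> Pmap \<alpha> \<beta> S z = (\<alpha> u * cos (Arg z), \<alpha> u * sin (Arg z), - \<beta> u)"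
    using r2 p2 uv by (simp add: Pmap_def)
  have orb: "Pmap \<alpha> \<beta> S ` {z. cmod z = r2} = reflXY ` (Pmap \<alpha> \<beta> S ` {z. cmod z = r1})"
  proof (rule set_eqI, rule iffI)
    fix x assume "x \<in> Pmap \<alpha> \<beta> S ` {z. cmod z = r2}"
    then obtain z where z: "cmod z = r2" "x = Pmap \<alpha> \<beta> S z" by blast
    define w where "w = z * of_real (r1 / r2)"
    have w: "cmod w = r1" using z r1 r2 by (simp add: w_def norm_mult norm_divide)
    have aw: "Arg w = Arg z" unfolding w_def by (rule Arg_times_of_real2) (use r1 r2 in simp)
    have "x = reflXY (Pmap \<alpha> \<beta> S w)" using P1[OF w] P2[OF z(1)] z(2) aw by simp
    then show "x \<in> reflXY ` (Pmap \<alpha> \<beta> S ` {z. cmod z = r1})" using w by blast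
  next
    fix x assume "x \<in> reflXY ` (Pmap \<alpha> \<beta> S ` {z. cmod z = r1})"
    then obtain w where w: "cmod w = r1" "x = reflXY (Pmap \<alpha> \<beta> S w)" by blast
    define z where "z = w * of_real (r2 / r1)"
    have z: "cmod z = r2" using w r1 r2 by (simp add: z_def norm_mult norm_divide)
    have az: "Arg z = Arg w" unfolding z_def by (rule Arg_times_of_real2) (use r1 r2 in simp)
    have "x = Pmap \<alpha> \<beta> S z" using P1[OF w(1)] P2[OF z] w(2) az by simp
    then show "x \<in> Pmap \<alpha> \<beta> S ` {z. cmod z = r2}" using z by blast
  qed
  show ?thesis using r1(1) r2(1) dist om orb by blast
qed

end
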